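(* Let $S=K[x_1,\dots,x_n]$ with $K$ an $F$-finite field of prime characteristic $p$, $I\subseteq S$ a squarefree monomial ideal, and $R=S/I$. If $J$ is a monomial ideal of $R$ and $e\in\mathbb N$, then $J_e$ and $\mathcal P(J)$ are monomial ideals of $R$.
   Context: A monomial ideal of $R$ is one generated by images of monomials. $J_e=\{f\in R\mid \varphi(f^{1/p^e})\in J \text{ for all }\varphi\in\operatorname{Hom}_R(R^{1/p^e},R)\}$ and $\mathcal P(J)=\bigcap_{s\in\mathbb N}J_s$ (Cartier core). *)

theory Defs
  imports "HOL-Library.Poly_Mapping" "HOL-Algebra.QuotRing" "HOL-Computational_Algebra.Primes"
begin

type_synonym ('v, 'k) mpoly = "('v \<Rightarrow>\<^sub>0 nat) \<Rightarrow>\<^sub>0 'k"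

definition polyring :: "('v, 'k::comm_ring_1) mpoly ring" where
  "polyring = \<lparr>carrier = UNIV, monoid.mult = (*), one = 1, zero = 0, add = (+)\<rparr>"

definition monom_pm :: "('v \<Rightarrow>\<^sub>0 nat) \<Rightarrow> ('v, 'k::comm_ring_1) mpoly" where
  "monom_pm a = Poly_Mapping.single a 1"

definition squarefree_monomial_ideal :: "('v, 'k::comm_ring_1) mpoly set \<Rightarrow> bool" where
  "squarefree_monomial_ideal I \<longleftrightarrow>
     (\<exists>G. (\<forall>a\<in>G. \<forall>v. Poly_Mapping.lookup a v \<le> 1) \<and> I = genideal polyring (monom_pm ` G))"

definition monomial_ideal_quot ::
  "('v, 'k::comm_ring_1) mpoly set \<Rightarrow> ('v, 'k) mpoly set set \<Rightarrow> bool" where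
  "monomial_ideal_quot I J \<longleftrightarrow>
     (\<exists>G. J = genideal (polyring Quot I) ((\<lambda>a. I +>\<^bsub>polyring\<^esub> monom_pm a) ` G))"

text \<open>Hom_R(R^{1/q}, R) with q = p^e: additive maps phi : R \<rightarrow> R with
  phi(r^q s) = r phi(s) (i.e. R-linear for the Frobenius-twisted structure).
  phi(f^{1/q}) is phi applied to f.\<close>
definition frob_hom :: "('a, 'b) ring_scheme \<Rightarrow> nat \<Rightarrow> nat \<Rightarrow> ('a \<Rightarrow> 'a) set" where
  "frob_hom R p e = {\<phi>. \<phi> \<in> carrier R \<rightarrow> carrier R \<and>
      (\<forall>a\<in>carrier R. \<forall>b\<in>carrier R. \<phi> (a \<oplus>\<^bsub>R\<^esub> b) = \<phi> a \<oplus>\<^bsub>R\<^esub> \<phi> b) \<and>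
      (\<forall>r\<in>carrier R. \<forall>s\<in>carrier R.
          \<phi> ((r [^]\<^bsub>R\<^esub> (p ^ e)) \<otimes>\<^bsub>R\<^esub> s) = r \<otimes>\<^bsub>R\<^esub> \<phi> s)}"

definition cartier_ideal :: "('a, 'b) ring_scheme \<Rightarrow> nat \<Rightarrow> nat \<Rightarrow> 'a set \<Rightarrow> 'a set" where
  "cartier_ideal R p e J = {f \<in> carrier R. \<forall>\<phi>\<in>frob_hom R p e. \<phi> f \<in> J}"

definition cartier_core :: "('a, 'b) ring_scheme \<Rightarrow> nat \<Rightarrow> 'a set \<Rightarrow> 'a set" where
  "cartier_core R p J = (\<Inter>s. cartier_ideal R p s J)"

definition F_finite :: "'k::field itself \<Rightarrow> bool" where
  "F_finite _ \<longleftrightarrow> (\<exists>B::'k set. finite B \<and>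
      (\<forall>x::'k. \<exists>c. x = (\<Sum>b\<in>B. c b ^ CHAR('k) * b)))"

end

theory Submission imports Defs begin

abbreviation lookup where "lookup \<equiv> Poly_Mapping.lookup"
abbreviation keys where "keys \<equiv> Poly_Mapping.keys"

lemma polyring_simps[simp]:
  "carrier (polyring :: ('v,'k::comm_ring_1) mpoly ring) = UNIV"
  "x \<otimes>\<^bsub>polyring\<^esub> y = x * y"
  "x \<oplus>\<^bsub>polyring\<^esub> y = x + y"
  "\<one>\<^bsub>polyring\<^esub> = 1"
  "\<zero>\<^bsub>polyring\<^esub> = 0"
  by (simp_all add: polyring_def)

lemma polyring_cring: "cring (polyring :: ('v,'k::comm_ring_1) mpoly ring)"
proof (rule cringI)
  show "abelian_group (polyring :: ('v,'k::comm_ring_1) mpoly ring)"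
    by (rule abelian_groupI) (auto simp: polyring_def intro: left_minus)
  show "Group.comm_monoid (polyring :: ('v,'k::comm_ring_1) mpoly ring)"
    by (rule monoid.monoid_comm_monoidI) (auto simp: polyring_def intro!: monoidI mult.commute mult.assoc)
qed (auto simp: polyring_def distrib_right)

interpretation P: cring "polyring :: ('v,'k::comm_ring_1) mpoly ring"
  by (rule polyring_cring)

lemma polyring_minus[simp]: "\<ominus>\<^bsub>polyring\<^esub> x = - (x :: ('v,'k::comm_ring_1) mpoly)"
  by (rule P.minus_equality) auto

lemma polyring_pow[simp]: "x [^]\<^bsub>polyring\<^esub> (n::nat) = (x :: ('v,'k::comm_ring_1) mpoly) ^ n"
  by (induct n) (auto simp: mult.commute)

lemma ideal_polyringI:
  assumes "(0::('v,'k::comm_ring_1) mpoly) \<in> A" "\<And>x y. x \<in> A \<Longrightarrow> y \<in> A \<Longrightarrow> x + y \<in> A"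
    "\<And>x. x \<in> A \<Longrightarrow> - x \<in> A" "\<And>x y. x \<in> A \<Longrightarrow> y * x \<in> A"
  shows "ideal A polyring"
  apply (rule idealI)
  apply (rule P.ring_axioms)
  apply (rule P.add.subgroupI)
  using assms by (auto simp: mult.commute)

lemma ideal_polyringD:
  assumes "ideal A (polyring :: ('v,'k::comm_ring_1) mpoly ring)"
  shows "0 \<in> A" "x \<in> A \<Longrightarrow> y \<in> A \<Longrightarrow> x + y \<in> A" "x \<in> A \<Longrightarrow> - x \<in> A"
    "x \<in> A \<Longrightarrow> y * x \<in> A" "x \<in> A \<Longrightarrow> x * y \<in> A"
    "x \<in> A \<Longrightarrow> y \<in> A \<Longrightarrow> x - y \<in> A"
proof -
  interpret ideal A polyring by fact
  show "0 \<in> A" using zero_closed by simp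
  show "x \<in> A \<Longrightarrow> y \<in> A \<Longrightarrow> x + y \<in> A" using a_closed by simp
  show "x \<in> A \<Longrightarrow> - x \<in> A" using a_inv_closed by simp
  show "x \<in> A \<Longrightarrow> y * x \<in> A" using I_l_closed by simp
  show "x \<in> A \<Longrightarrow> x * y \<in> A" using I_r_closed by simp
  show "x \<in> A \<Longrightarrow> y \<in> A \<Longrightarrow> x - y \<in> A" using a_closed a_inv_closed
    by (metis polyring_minus polyring_simps(3) diff_conv_add_uminus)
qed

lemma ideal_sum:
  assumes "ideal A (polyring :: ('v,'k::comm_ring_1) mpoly ring)" "\<And>i. i \<in> S \<Longrightarrow> f i \<in> A"
  shows "sum f S \<in> A"
  using assms(2)
  by (induct S rule: infinite_finite_induct) (auto intro: ideal_polyringD[OF assms(1)])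

definition tm :: "('v \<Rightarrow>\<^sub>0 nat) \<Rightarrow> ('v,'k::comm_ring_1) mpoly \<Rightarrow> ('v,'k) mpoly" where
  "tm a f = Poly_Mapping.single a (lookup f a)"

definition mdvd :: "('v \<Rightarrow>\<^sub>0 nat) \<Rightarrow> ('v \<Rightarrow>\<^sub>0 nat) \<Rightarrow> bool" where
  "mdvd g a \<longleftrightarrow> (\<exists>k. a = g + k)"

definition MI :: "('v \<Rightarrow>\<^sub>0 nat) set \<Rightarrow> ('v,'k::comm_ring_1) mpoly set" where
  "MI H = {f. \<forall>a\<in>keys f. \<exists>h\<in>H. mdvd h a}"

lemma lookup_tm: "lookup (tm a f) x = (if x = a then lookup f a else 0)"
  by (auto simp: tm_def lookup_single when_def)

lemma keys_tm: "keys (tm a f) \<subseteq> keys f \<inter> {a}"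
  by (auto simp: in_keys_iff lookup_tm split: if_splits)

lemma tm_add: "tm a (f + g) = tm a f + tm a g"
  by (simp add: tm_def lookup_add single_add)

lemma tm_zero[simp]: "tm a 0 = 0"
  by (simp add: tm_def)

lemma tm_uminus: "tm a (- f) = - tm a f"
  by (simp add: tm_def single_uminus)

lemma tm_diff: "tm a (f - g) = tm a f - tm a g"
  by (simp add: tm_def lookup_minus single_diff)

lemma tm_sum: "tm a (sum f A) = (\<Sum>i\<in>A. tm a (f i))"
  by (induct A rule: infinite_finite_induct) (auto simp: tm_add)

lemma tm_tm: "tm c (tm a f) = (if c = a then tm a f else 0)"
  by (rule poly_mapping_eqI) (auto simp: lookup_tm)

lemma poly_sum_tm: "f = (\<Sum>a\<in>keys f. tm a f)"
  by (rule poly_mapping_eqI)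
     (auto simp: lookup_sum lookup_tm in_keys_iff sum.delta' split: if_splits)

lemma tm_not_key: "a \<notin> keys f \<Longrightarrow> tm a f = 0"
  by (simp add: tm_def in_keys_iff)

lemma MI_keys: "f \<in> MI H \<Longrightarrow> keys g \<subseteq> keys f \<Longrightarrow> g \<in> MI H"
  by (auto simp: MI_def)

lemma MI_tm: "f \<in> MI H \<Longrightarrow> tm a f \<in> MI H"
  by (rule MI_keys) (use keys_tm in auto)

lemma MI_mono: "H \<subseteq> H' \<Longrightarrow> MI H \<subseteq> MI H'"
  unfolding MI_def by blast

lemma MI_ideal: "ideal (MI H) (polyring :: ('v,'k::comm_ring_1) mpoly ring)"
proof (rule ideal_polyringI)
  show "0 \<in> MI H" by (simp add: MI_def)
  show "x + y \<in> MI H" if "x \<in> MI H" "y \<in> MI H" for x y :: "('v,'k) mpoly"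
    using that keys_add[of x y] by (auto simp: MI_def)
  show "- x \<in> MI H" if "x \<in> MI H" for x :: "('v,'k) mpoly"
    using that by (auto simp: MI_def keys_def)
  show "y * x \<in> MI H" if hx: "x \<in> MI H" for x y :: "('v,'k) mpoly"
  proof -
    { fix c assume "c \<in> keys (y * x)"
      then obtain a b where "c = a + b" "b \<in> keys x" using keys_mult[of y x] by blast
      then obtain h k where "h \<in> H" "b = h + k" using hx unfolding MI_def mdvd_def by blast
      then have "\<exists>h\<in>H. mdvd h c" using \<open>c = a + b\<close> unfolding mdvd_def
        by (intro bexI[of _ h] exI[of _ "k + a"]) (auto simp: add_ac) }
    then show ?thesis by (auto simp: MI_def)
  qed
qed

lemma monom_MI: "h \<in> H \<Longrightarrow> monom_pm h \<in> MI H"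
  by (auto simp: MI_def monom_pm_def mdvd_def split: if_splits intro!: exI[of _ 0])

lemma genideal_MI: "genideal polyring (monom_pm ` H) = (MI H :: ('v,'k::comm_ring_1) mpoly set)"
proof
  show "genideal polyring (monom_pm ` H) \<subseteq> (MI H :: ('v,'k::comm_ring_1) mpoly set)"
    by (rule P.genideal_minimal[OF MI_ideal]) (auto intro: monom_MI)
next
  have id: "ideal (genideal polyring (monom_pm ` H)) (polyring :: ('v,'k) mpoly ring)"
    by (rule P.genideal_ideal) auto
  have gen: "monom_pm h \<in> genideal polyring (monom_pm ` H)" if "h \<in> H" for h :: "'v \<Rightarrow>\<^sub>0 nat"
    using P.genideal_self[of "monom_pm ` H"] that by auto
  show "(MI H :: ('v,'k::comm_ring_1) mpoly set) \<subseteq> genideal polyring (monom_pm ` H)"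
  proof
    fix f :: "('v,'k) mpoly" assume f: "f \<in> MI H"
    have "(\<Sum>a\<in>keys f. tm a f) \<in> genideal polyring (monom_pm ` H)"
    proof (rule ideal_sum[OF id])
      fix a assume a: "a \<in> keys f"
      then obtain h k where hk: "h \<in> H" "a = h + k" using f by (auto simp: MI_def mdvd_def)
      have "tm a f = Poly_Mapping.single k (lookup f a) * monom_pm h"
        by (simp add: tm_def monom_pm_def mult_single hk add.commute)
      then show "tm a f \<in> genideal polyring (monom_pm ` H)"
        using ideal_polyringD(4)[OF id gen[OF hk(1)]] by simp
    qed
    then show "f \<in> genideal polyring (monom_pm ` H)" using poly_sum_tm[of f] by simp
  qed
qed

definition filt :: "('v \<Rightarrow>\<^sub>0 nat) set \<Rightarrow> ('v,'k::comm_ring_1) mpoly \<Rightarrow> ('v,'k) mpoly" where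
  "filt A g = Abs_poly_mapping (\<lambda>x. if x \<in> A then lookup g x else 0)"

lemma lookup_filt: "lookup (filt A g) x = (if x \<in> A then lookup g x else 0)"
proof -
  have "finite {x. (if x \<in> A then lookup g x else 0) \<noteq> 0}"
    by (rule finite_subset[of _ "{x. lookup g x \<noteq> 0}"]) auto
  then show ?thesis by (simp add: filt_def)
qed

lemma keys_filt: "keys (filt A g) \<subseteq> keys g"
  by (auto simp: in_keys_iff lookup_filt split: if_splits)

lemma filt_add: "filt A (f + g) = filt A f + filt A g"
  by (rule poly_mapping_eqI) (simp add: lookup_filt lookup_add)

lemma filt_diff: "filt A (f - g) = filt A f - filt A g"
  by (rule poly_mapping_eqI) (simp add: lookup_filt lookup_minus)

lemma filt_zero[simp]: "filt A 0 = 0"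
  by (rule poly_mapping_eqI) (simp add: lookup_filt)

lemma filt_sum: "filt A (sum f S) = (\<Sum>i\<in>S. filt A (f i))"
  by (induct S rule: infinite_finite_induct) (auto simp: filt_add)

lemma filt_single: "filt A (Poly_Mapping.single x c) = (if x \<in> A then Poly_Mapping.single x c else 0)"
  by (rule poly_mapping_eqI) (auto simp: lookup_filt lookup_single when_def)

lemma tm_filt: "tm c (filt A h) = (if c \<in> A then tm c h else 0)"
  by (simp add: tm_def lookup_filt)

lemma filt_shift:
  assumes "\<And>y. a' + y \<in> B \<longleftrightarrow> y \<in> A"
  shows "filt B (Poly_Mapping.single a' \<kappa> * h) = Poly_Mapping.single a' \<kappa> * filt A (h :: ('v,'k::comm_ring_1) mpoly)"
proof -
  have "filt B (Poly_Mapping.single a' \<kappa> * h) = filt B (\<Sum>y\<in>keys h. Poly_Mapping.single a' \<kappa> * tm y h)"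
    by (subst poly_sum_tm[of h]) (simp add: sum_distrib_left)
  also have "\<dots> = (\<Sum>y\<in>keys h. Poly_Mapping.single a' \<kappa> * filt A (tm y h))"
    unfolding filt_sum
    by (rule sum.cong) (auto simp: tm_def mult_single filt_single assms)
  also have "\<dots> = Poly_Mapping.single a' \<kappa> * filt A h"
    by (subst (2) poly_sum_tm[of h]) (simp add: sum_distrib_left filt_sum)
  finally show ?thesis .
qed

definition scal :: "nat \<Rightarrow> ('v \<Rightarrow>\<^sub>0 nat) \<Rightarrow> ('v \<Rightarrow>\<^sub>0 nat)" where
  "scal n a = Abs_poly_mapping (\<lambda>v. n * lookup a v)"

lemma lookup_scal: "lookup (scal n a) v = n * lookup a v"
proof -
  have "finite {v. n * lookup a v \<noteq> 0}"
    by (rule finite_subset[of _ "{v. lookup a v \<noteq> 0}"]) auto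
  then show ?thesis by (simp add: scal_def)
qed

lemma single_pow: "Poly_Mapping.single a \<kappa> ^ n = Poly_Mapping.single (scal n a) (\<kappa> ^ n :: 'k::comm_ring_1)"
proof (induct n)
  case 0
  have "scal 0 a = 0" by (rule poly_mapping_eqI) (simp add: lookup_scal)
  then show ?case by simp
next
  case (Suc n)
  have "a + scal n a = scal (Suc n) a" by (rule poly_mapping_eqI) (simp add: lookup_scal lookup_add)
  then show ?case using Suc by (simp add: mult_single)
qed

lemma CHAR_mpoly: "CHAR(('v,'k::comm_ring_1) mpoly) = CHAR('k)"
proof (rule CHAR_eqI)
  show "of_nat CHAR('k) = (0 :: ('v,'k) mpoly)"
    by (metis of_nat_CHAR single_of_nat single_zero)
  show "CHAR('k) dvd x" if "of_nat x = (0 :: ('v,'k) mpoly)" for x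
  proof -
    have "Poly_Mapping.single 0 (of_nat x :: 'k) = (0 :: ('v,'k) mpoly)" using that by (metis single_of_nat)
    then have "(of_nat x :: 'k) = 0" by (metis lookup_single_eq lookup_zero)
    then show ?thesis by (simp add: of_nat_eq_0_iff_char_dvd)
  qed
qed

locale setting =
  fixes GI :: "('v \<Rightarrow>\<^sub>0 nat) set" and I :: "('v,'k::field) mpoly set"
  assumes I_def: "I = MI GI"
begin

abbreviation R where "R \<equiv> polyring Quot I"
definition pi :: "('v,'k) mpoly \<Rightarrow> ('v,'k) mpoly set" where "pi u = I +>\<^bsub>polyring\<^esub> u"

lemma idI: "ideal I polyring"
  unfolding I_def by (rule MI_ideal)

lemma I_tm: "f \<in> I \<Longrightarrow> tm a f \<in> I"
  unfolding I_def by (rule MI_tm)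

lemma R_cring: "cring R"
  by (rule ideal.quotient_is_cring[OF idI polyring_cring])

sublocale Rr: cring R by (rule R_cring)

lemma pi_hom: "ring_hom_ring polyring R pi"
  unfolding pi_def[abs_def] by (rule ideal.rcos_ring_hom_ring[OF idI])

lemma pi_hom': "pi \<in> ring_hom polyring R"
  unfolding pi_def[abs_def] by (rule ideal.rcos_ring_hom[OF idI])

lemma pi_add: "pi (u + v) = pi u \<oplus>\<^bsub>R\<^esub> pi v"
  using ring_hom_add[OF pi_hom', of u v] by simp

lemma pi_mult: "pi (u * v) = pi u \<otimes>\<^bsub>R\<^esub> pi v"
  using ring_hom_mult[OF pi_hom', of u v] by simp

lemma pi_pow: "pi (u ^ n) = pi u [^]\<^bsub>R\<^esub> (n::nat)"
  using ring_hom_ring.hom_nat_pow[OF pi_hom, of u n] by simp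

lemma pi_zero: "pi 0 = \<zero>\<^bsub>R\<^esub>"
  using ring_hom_zero[OF pi_hom' P.ring_axioms Rr.ring_axioms] by simp

lemma pi_one: "pi 1 = \<one>\<^bsub>R\<^esub>"
  using ring_hom_one[OF pi_hom'] by simp

lemma pi_carrier[simp]: "pi u \<in> carrier R"
  using ring_hom_closed[OF pi_hom', of u] by simp

lemma carrier_R: "carrier R = range pi"
  by (auto simp: FactRing_def A_RCOSETS_def' pi_def)

lemma pi_set: "pi u = {h + u | h. h \<in> I}"
  by (auto simp: pi_def a_r_coset_def')

lemma pi_set2: "pi u = (\<lambda>h. h + u) ` I"
  by (auto simp: pi_set)

lemma pi_sub: "u - v \<in> I \<Longrightarrow> pi u \<subseteq> pi v"
proof
  fix x assume d: "u - v \<in> I" and "x \<in> pi u"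
  then obtain h where h: "h \<in> I" "x = h + u" by (auto simp: pi_set2)
  then have "h + (u - v) \<in> I" using ideal_polyringD(2)[OF idI h(1) d] by simp
  moreover have "x = (h + (u - v)) + v" using h by simp
  ultimately show "x \<in> pi v" unfolding pi_set2 by blast
qed

lemma pi_eq: "pi u = pi v \<longleftrightarrow> u - v \<in> I"
proof
  assume "pi u = pi v"
  moreover have "u \<in> pi u" using ideal_polyringD(1)[OF idI] unfolding pi_set2 by force
  ultimately obtain h where "h \<in> I" "u = h + v" by (auto simp: pi_set2)
  then show "u - v \<in> I" by simp
next
  assume d: "u - v \<in> I"
  have "v - u \<in> I" using ideal_polyringD(3)[OF idI d] by simp
  then show "pi u = pi v" using pi_sub d by blast
qed

lemma pi_zero_iff: "pi u = \<zero>\<^bsub>R\<^esub> \<longleftrightarrow> u \<in> I"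
  using pi_eq[of u 0] by (simp add: pi_zero)

lemma carrier_R_E: "x \<in> carrier R \<Longrightarrow> (\<And>u. x = pi u \<Longrightarrow> P) \<Longrightarrow> P"
  using carrier_R by auto

lemma pre_ideal: "ideal A R \<Longrightarrow> ideal {u. pi u \<in> A} polyring"
  using ring_hom_ring.ideal_vimage[OF pi_hom, of A] by simp

lemma ideal_from_tms:
  assumes "ideal A R" "\<And>a. pi (tm a u) \<in> A"
  shows "pi u \<in> A"
proof -
  have "(\<Sum>a\<in>keys u. tm a u) \<in> {u. pi u \<in> A}"
    by (rule ideal_sum[OF pre_ideal[OF assms(1)]]) (use assms(2) in auto)
  then show ?thesis using poly_sum_tm[of u] by simp
qed

lemma gen_eq: "(\<lambda>a. I +>\<^bsub>polyring\<^esub> monom_pm a) = (\<lambda>a. pi (monom_pm a))"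
  by (simp add: pi_def)

lemma monomial_of_TC:
  assumes A: "ideal A R" and tc: "\<And>u a. pi u \<in> A \<Longrightarrow> pi (tm a u) \<in> A"
  shows "monomial_ideal_quot I A"
proof -
  define G where "G = {a. pi (monom_pm a) \<in> A}"
  let ?Gen = "genideal R ((\<lambda>a. pi (monom_pm a)) ` G)"
  have Gid: "ideal ?Gen R" by (rule Rr.genideal_ideal) auto
  have "A = ?Gen"
  proof
    show "?Gen \<subseteq> A" by (rule Rr.genideal_minimal[OF A]) (auto simp: G_def)
  next
    show "A \<subseteq> ?Gen"
    proof
      fix x assume x: "x \<in> A"
      then have "x \<in> carrier R" using ideal.Icarr[OF A] by blast
      then obtain u where u: "x = pi u" by (rule carrier_R_E)
      have "pi (tm a u) \<in> ?Gen" for a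
      proof (cases "lookup u a = 0")
        case True
        then show ?thesis using ideal.I_l_closed[OF Gid] additive_subgroup.zero_closed[OF ideal.axioms(1)[OF Gid]]
          by (simp add: tm_def pi_zero)
      next
        case False
        let ?c = "lookup u a"
        have t: "pi (tm a u) \<in> A" using tc x u by blast
        have "monom_pm a = Poly_Mapping.single 0 (inverse ?c) * tm a u"
          using False by (simp add: tm_def monom_pm_def mult_single)
        then have "pi (monom_pm a) = pi (Poly_Mapping.single 0 (inverse ?c)) \<otimes>\<^bsub>R\<^esub> pi (tm a u)"
          by (simp add: pi_mult)
        then have "pi (monom_pm a) \<in> A" using ideal.I_l_closed[OF A t] by simp
        moreover have "(\<lambda>a. pi (monom_pm a)) ` G \<subseteq> ?Gen" by (rule Rr.genideal_self) auto
        ultimately have "pi (monom_pm a) \<in> ?Gen" by (auto simp: G_def)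
        moreover have "tm a u = Poly_Mapping.single 0 ?c * monom_pm a"
          by (simp add: tm_def monom_pm_def mult_single)
        ultimately show ?thesis using ideal.I_l_closed[OF Gid] by (simp add: pi_mult)
      qed
      then show "x \<in> ?Gen" using ideal_from_tms[OF Gid] u by blast
    qed
  qed
  then show ?thesis unfolding monomial_ideal_quot_def gen_eq by blast
qed

lemma TC_of_monomial:
  assumes "monomial_ideal_quot I A"
  shows "ideal A R" "\<And>u a. pi u \<in> A \<Longrightarrow> pi (tm a u) \<in> A"
proof -
  obtain G where AG: "A = genideal R ((\<lambda>a. pi (monom_pm a)) ` G)"
    using assms unfolding monomial_ideal_quot_def gen_eq by blast
  show Aid: "ideal A R" unfolding AG by (rule Rr.genideal_ideal) auto
  have gs: "(\<lambda>a. pi (monom_pm a)) ` G \<subseteq> A" unfolding AG by (rule Rr.genideal_self) auto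
  have gen: "pi (monom_pm g) \<in> A" if "g \<in> G" for g
    using gs that by auto
  let ?M = "MI (G \<union> GI) :: ('v,'k) mpoly set"
  have key: "pi u \<in> A \<longleftrightarrow> u \<in> ?M" for u
  proof
    assume "u \<in> ?M"
    moreover have "?M \<subseteq> {u. pi u \<in> A}"
    proof -
      have "genideal polyring (monom_pm ` (G \<union> GI)) \<subseteq> {u. pi u \<in> A}"
      proof (rule P.genideal_minimal[OF pre_ideal[OF Aid]])
        show "monom_pm ` (G \<union> GI) \<subseteq> {u. pi u \<in> A}"
        proof
          fix x :: "('v,'k) mpoly" assume "x \<in> monom_pm ` (G \<union> GI)"
          then obtain g where g: "g \<in> G \<union> GI" "x = monom_pm g" by blast
          show "x \<in> {u. pi u \<in> A}"
          proof (cases "g \<in> G")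
            case True then show ?thesis using gen g by auto
          next
            case False
            then have "x \<in> I" using g monom_MI[of g GI] I_def by auto
            then have "pi x = \<zero>\<^bsub>R\<^esub>" by (simp add: pi_zero_iff)
            then show ?thesis using additive_subgroup.zero_closed[OF ideal.axioms(1)[OF Aid]] by simp
          qed
        qed
      qed
      then show ?thesis by (simp add: genideal_MI)
    qed
    ultimately show "pi u \<in> A" by blast
  next
    assume u: "pi u \<in> A"
    have Mid: "ideal ?M polyring" by (rule MI_ideal)
    have img: "ideal (pi ` ?M) R"
      using P.ring_ideal_imp_quot_ideal[OF idI Mid] unfolding pi_def[abs_def] by simp
    have "A \<subseteq> pi ` ?M" unfolding AG
      by (rule Rr.genideal_minimal[OF img]) (auto intro: monom_MI)
    then obtain m where m: "m \<in> ?M" "pi u = pi m" using u by blast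
    then have "u - m \<in> I" by (simp add: pi_eq)
    then have "u - m \<in> ?M" using MI_mono[of GI "G \<union> GI"] I_def by auto
    then have "(u - m) + m \<in> ?M" using ideal_polyringD(2)[OF Mid _ m(1)] by blast
    then show "u \<in> ?M" by simp
  qed
  show "pi (tm a u) \<in> A" if "pi u \<in> A" for u a
    using key[of u] key[of "tm a u"] MI_tm that by blast
qed

lemma frob_hom_zero:
  assumes "\<phi> \<in> frob_hom R p e" shows "\<phi> \<zero>\<^bsub>R\<^esub> = \<zero>\<^bsub>R\<^esub>"
proof -
  have c: "\<phi> \<zero>\<^bsub>R\<^esub> \<in> carrier R" using assms by (auto simp: frob_hom_def)
  have "\<phi> \<zero>\<^bsub>R\<^esub> = \<phi> \<zero>\<^bsub>R\<^esub> \<oplus>\<^bsub>R\<^esub> \<phi> \<zero>\<^bsub>R\<^esub>"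
    using assms by (auto simp: frob_hom_def dest!: bspec[of _ _ "\<zero>\<^bsub>R\<^esub>"])
  then show ?thesis using c by (metis Rr.add.l_cancel_one' Rr.zero_closed)
qed

lemma frob_hom_neg:
  assumes "\<phi> \<in> frob_hom R p e" "x \<in> carrier R" shows "\<phi> (\<ominus>\<^bsub>R\<^esub> x) = \<ominus>\<^bsub>R\<^esub> \<phi> x"
proof -
  have c: "\<phi> x \<in> carrier R" "\<phi> (\<ominus>\<^bsub>R\<^esub> x) \<in> carrier R" using assms by (auto simp: frob_hom_def)
  have "\<phi> (x \<oplus>\<^bsub>R\<^esub> \<ominus>\<^bsub>R\<^esub> x) = \<phi> x \<oplus>\<^bsub>R\<^esub> \<phi> (\<ominus>\<^bsub>R\<^esub> x)"
    using assms by (auto simp: frob_hom_def)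
  then have "\<phi> x \<oplus>\<^bsub>R\<^esub> \<phi> (\<ominus>\<^bsub>R\<^esub> x) = \<zero>\<^bsub>R\<^esub>"
    using assms frob_hom_zero[OF assms(1)] by (simp add: Rr.r_neg)
  then show ?thesis using c by (metis Rr.minus_equality Rr.add.m_comm)
qed

lemma frob_hom_mult:
  assumes "\<phi> \<in> frob_hom R p e" "r \<in> carrier R" shows "(\<lambda>s. \<phi> (r \<otimes>\<^bsub>R\<^esub> s)) \<in> frob_hom R p e"
proof -
  have h: "\<phi> \<in> carrier R \<rightarrow> carrier R"
    "\<And>a b. a \<in> carrier R \<Longrightarrow> b \<in> carrier R \<Longrightarrow> \<phi> (a \<oplus>\<^bsub>R\<^esub> b) = \<phi> a \<oplus>\<^bsub>R\<^esub> \<phi> b"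
    "\<And>x s. x \<in> carrier R \<Longrightarrow> s \<in> carrier R \<Longrightarrow> \<phi> ((x [^]\<^bsub>R\<^esub> (p ^ e)) \<otimes>\<^bsub>R\<^esub> s) = x \<otimes>\<^bsub>R\<^esub> \<phi> s"
    using assms(1) unfolding frob_hom_def by blast+
  show ?thesis unfolding frob_hom_def
  proof (intro CollectI conjI ballI)
    show "(\<lambda>s. \<phi> (r \<otimes>\<^bsub>R\<^esub> s)) \<in> carrier R \<rightarrow> carrier R" using h(1) assms(2) by auto
    show "\<phi> (r \<otimes>\<^bsub>R\<^esub> (a \<oplus>\<^bsub>R\<^esub> b)) = \<phi> (r \<otimes>\<^bsub>R\<^esub> a) \<oplus>\<^bsub>R\<^esub> \<phi> (r \<otimes>\<^bsub>R\<^esub> b)"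
      if "a \<in> carrier R" "b \<in> carrier R" for a b
      using that assms(2) h(2) by (simp add: Rr.r_distr)
    show "\<phi> (r \<otimes>\<^bsub>R\<^esub> (x [^]\<^bsub>R\<^esub> (p ^ e) \<otimes>\<^bsub>R\<^esub> s)) = x \<otimes>\<^bsub>R\<^esub> \<phi> (r \<otimes>\<^bsub>R\<^esub> s)"
      if "x \<in> carrier R" "s \<in> carrier R" for x s
      using that assms(2) h(3)[of x "r \<otimes>\<^bsub>R\<^esub> s"] by (simp add: Rr.m_lcomm)
  qed
qed

lemma cartier_ideal_ideal:
  assumes J: "ideal J R"
  shows "ideal (cartier_ideal R p e J) R"
proof (rule idealI[OF Rr.ring_axioms])
  interpret J: ideal J R by fact
  show "subgroup (cartier_ideal R p e J) (add_monoid R)"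
  proof (rule Rr.add.subgroupI)
    show "cartier_ideal R p e J \<subseteq> carrier R" by (auto simp: cartier_ideal_def)
    have "\<zero>\<^bsub>R\<^esub> \<in> cartier_ideal R p e J" by (auto simp: cartier_ideal_def frob_hom_zero)
    then show "cartier_ideal R p e J \<noteq> {}" by blast
    show "\<ominus>\<^bsub>R\<^esub> a \<in> cartier_ideal R p e J" if "a \<in> cartier_ideal R p e J" for a
      using that by (auto simp: cartier_ideal_def frob_hom_neg)
    show "a \<oplus>\<^bsub>R\<^esub> b \<in> cartier_ideal R p e J" if "a \<in> cartier_ideal R p e J" "b \<in> cartier_ideal R p e J" for a b
      using that by (auto simp: cartier_ideal_def frob_hom_def)
  qed
  show "x \<otimes>\<^bsub>R\<^esub> a \<in> cartier_ideal R p e J" if "a \<in> cartier_ideal R p e J" "x \<in> carrier R" for a x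
    using that frob_hom_mult by (auto simp: cartier_ideal_def)
  show "a \<otimes>\<^bsub>R\<^esub> x \<in> cartier_ideal R p e J" if "a \<in> cartier_ideal R p e J" "x \<in> carrier R" for a x
  proof -
    have "x \<otimes>\<^bsub>R\<^esub> a \<in> cartier_ideal R p e J"
      using that frob_hom_mult by (auto simp: cartier_ideal_def)
    then show ?thesis using that by (simp add: Rr.m_comm cartier_ideal_def)
  qed
qed

lemma I_filt: "f \<in> I \<Longrightarrow> filt A f \<in> I"
  unfolding I_def by (rule MI_keys[OF _ keys_filt])

lemma pi_filt: "pi u = pi v \<Longrightarrow> pi (filt A u) = pi (filt A v)"
  by (simp add: pi_eq I_filt flip: filt_diff)

lemma pi_tm: "pi u = pi v \<Longrightarrow> pi (tm a u) = pi (tm a v)"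
  by (simp add: pi_eq I_tm flip: tm_diff)

lemma pi_sum_cong:
  assumes "\<And>a. a \<in> A \<Longrightarrow> pi (f a) = pi (g a)" shows "pi (sum f A) = pi (sum g A)"
proof -
  have "(\<Sum>a\<in>A. f a - g a) \<in> I" using assms by (intro ideal_sum[OF idI]) (simp add: pi_eq)
  then show ?thesis by (simp add: pi_eq sum_subtractf)
qed

lemma pi_add_cong: "pi a = pi a' \<Longrightarrow> pi b = pi b' \<Longrightarrow> pi (a + b) = pi (a' + b')"
  by (simp add: pi_add)

lemma pi_mult_cong: "pi a = pi a' \<Longrightarrow> pi b = pi b' \<Longrightarrow> pi (a * b) = pi (a' * b')"
  by (simp add: pi_mult)

definition Phi :: "(('v,'k) mpoly set \<Rightarrow> ('v,'k) mpoly set) \<Rightarrow> ('v,'k) mpoly \<Rightarrow> ('v,'k) mpoly" where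
  "Phi \<phi> u = (SOME w. \<phi> (pi u) = pi w)"

definition Cset :: "nat \<Rightarrow> ('v \<Rightarrow>\<^sub>0 nat) \<Rightarrow> ('v \<Rightarrow>\<^sub>0 nat) \<Rightarrow> ('v \<Rightarrow>\<^sub>0 nat) \<Rightarrow> ('v \<Rightarrow>\<^sub>0 nat) set" where
  "Cset q b c a = {c'. \<forall>v. q * lookup c' v + lookup b v = q * lookup c v + lookup a v}"

definition Psi where
  "Psi \<phi> q b c u = (\<Sum>a\<in>keys u. filt (Cset q b c a) (Phi \<phi> (tm a u)))"

definition psi where
  "psi \<phi> q b c x = pi (Psi \<phi> q b c (SOME u. x = pi u))"

context
  fixes \<phi> :: "('v,'k) mpoly set \<Rightarrow> ('v,'k) mpoly set" and p e :: nat and b c :: "'v \<Rightarrow>\<^sub>0 nat"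
  assumes p: "p = CHAR('k)" "prime p" and \<phi>: "\<phi> \<in> frob_hom R p e"
begin

abbreviation "q \<equiv> p ^ e"
abbreviation "\<Phi> \<equiv> Phi \<phi>"
abbreviation "\<Psi> \<equiv> Psi \<phi> q b c"

lemma phi_hom:
  "\<phi> \<in> carrier R \<rightarrow> carrier R"
  "\<And>a b. a \<in> carrier R \<Longrightarrow> b \<in> carrier R \<Longrightarrow> \<phi> (a \<oplus>\<^bsub>R\<^esub> b) = \<phi> a \<oplus>\<^bsub>R\<^esub> \<phi> b"
  "\<And>x s. x \<in> carrier R \<Longrightarrow> s \<in> carrier R \<Longrightarrow> \<phi> ((x [^]\<^bsub>R\<^esub> q) \<otimes>\<^bsub>R\<^esub> s) = x \<otimes>\<^bsub>R\<^esub> \<phi> s"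
  using \<phi> unfolding frob_hom_def by blast+

lemma Phi_pi: "pi (\<Phi> u) = \<phi> (pi u)"
proof -
  have "\<phi> (pi u) \<in> carrier R" using phi_hom(1) by auto
  then have "\<exists>w. \<phi> (pi u) = pi w" using carrier_R by auto
  then show ?thesis unfolding Phi_def by (metis (mono_tags) someI_ex)
qed

lemma Phi_I: "u \<in> I \<Longrightarrow> \<Phi> u \<in> I"
proof -
  assume "u \<in> I"
  then have "pi u = \<zero>\<^bsub>R\<^esub>" by (simp add: pi_zero_iff)
  then have "pi (\<Phi> u) = \<zero>\<^bsub>R\<^esub>" by (simp add: Phi_pi frob_hom_zero[OF \<phi>])
  then show ?thesis by (simp add: pi_zero_iff)
qed

lemma Phi_cong: "pi u = pi v \<Longrightarrow> pi (\<Phi> u) = pi (\<Phi> v)"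
  by (simp add: Phi_pi)

lemma Phi_add: "pi (\<Phi> (u + v)) = pi (\<Phi> u + \<Phi> v)"
proof -
  have "pi (\<Phi> (u + v)) = \<phi> (pi u \<oplus>\<^bsub>R\<^esub> pi v)" by (simp only: Phi_pi pi_add)
  also have "\<dots> = \<phi> (pi u) \<oplus>\<^bsub>R\<^esub> \<phi> (pi v)" by (rule phi_hom(2)) auto
  also have "\<dots> = pi (\<Phi> u + \<Phi> v)" by (simp only: Phi_pi pi_add)
  finally show ?thesis .
qed

lemma Phi_frob: "pi (\<Phi> (g ^ q * t)) = pi (g * \<Phi> t)"
proof -
  have "pi (\<Phi> (g ^ q * t)) = \<phi> ((pi g [^]\<^bsub>R\<^esub> q) \<otimes>\<^bsub>R\<^esub> pi t)" by (simp only: Phi_pi pi_mult pi_pow)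
  also have "\<dots> = pi g \<otimes>\<^bsub>R\<^esub> \<phi> (pi t)" by (rule phi_hom(3)) auto
  also have "\<dots> = pi (g * \<Phi> t)" by (simp only: Phi_pi pi_mult)
  finally show ?thesis .
qed

lemma Psi_super:
  assumes "finite A" "keys u \<subseteq> A"
  shows "pi (\<Psi> u) = pi (\<Sum>a\<in>A. filt (Cset q b c a) (\<Phi> (tm a u)))"
proof -
  let ?f = "\<lambda>a. filt (Cset q b c a) (\<Phi> (tm a u))"
  have "sum ?f A = sum ?f (keys u) + sum ?f (A - keys u)"
    using sum.subset_diff[OF assms(2,1), of ?f] by (simp only: add.commute)
  moreover have "sum ?f (A - keys u) \<in> I"
  proof (rule ideal_sum[OF idI])
    fix a assume "a \<in> A - keys u"
    then have "tm a u = 0" by (simp add: tm_not_key)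
    then have "tm a u \<in> I" using ideal_polyringD(1)[OF idI] by simp
    then show "?f a \<in> I" by (intro I_filt Phi_I)
  qed
  ultimately show ?thesis unfolding Psi_def pi_eq using ideal_polyringD(3)[OF idI] by simp
qed

lemma Psi_add: "pi (\<Psi> (u + v)) = pi (\<Psi> u + \<Psi> v)"
proof -
  let ?A = "keys u \<union> keys v"
  let ?f = "\<lambda>w a. filt (Cset q b c a) (\<Phi> (tm a w))"
  have "pi (\<Psi> (u + v)) = pi (sum (?f (u + v)) ?A)"
    by (rule Psi_super) (auto simp: keys_add)
  also have "\<dots> = pi (\<Sum>a\<in>?A. ?f u a + ?f v a)"
  proof (rule pi_sum_cong)
    fix a
    have "pi (\<Phi> (tm a (u + v))) = pi (\<Phi> (tm a u) + \<Phi> (tm a v))"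
      unfolding tm_add by (rule Phi_add)
    then have "pi (filt (Cset q b c a) (\<Phi> (tm a (u + v)))) = pi (filt (Cset q b c a) (\<Phi> (tm a u) + \<Phi> (tm a v)))"
      by (rule pi_filt)
    then show "pi (?f (u + v) a) = pi (?f u a + ?f v a)" by (simp only: filt_add)
  qed
  also have "\<dots> = pi (sum (?f u) ?A + sum (?f v) ?A)" by (simp add: sum.distrib)
  also have "\<dots> = pi (\<Psi> u + \<Psi> v)"
    by (rule pi_add_cong; rule Psi_super[symmetric]) auto
  finally show ?thesis .
qed

lemma Psi_zero[simp]: "\<Psi> 0 = 0"
  by (simp add: Psi_def)

lemma Psi_I: "u \<in> I \<Longrightarrow> \<Psi> u \<in> I"
  unfolding Psi_def by (rule ideal_sum[OF idI]) (auto intro!: I_filt Phi_I I_tm)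

lemma Psi_cong: "pi u = pi v \<Longrightarrow> pi (\<Psi> u) = pi (\<Psi> v)"
proof -
  assume "pi u = pi v"
  then have d: "u - v \<in> I" by (simp add: pi_eq)
  have "pi (\<Psi> u) = pi (\<Psi> (v + (u - v)))" by simp
  also have "\<dots> = pi (\<Psi> v + \<Psi> (u - v))" by (rule Psi_add)
  also have "\<dots> = pi (\<Psi> v + 0)" by (rule pi_add_cong) (use Psi_I[OF d] in \<open>auto simp: pi_eq\<close>)
  finally show ?thesis by simp
qed

lemma Psi_sum: "pi (\<Psi> (sum f A)) = pi (\<Sum>i\<in>A. \<Psi> (f i))"
proof (induct A rule: infinite_finite_induct)
  case (insert x F)
  have "pi (\<Psi> (sum f (insert x F))) = pi (\<Psi> (f x + sum f F))" using insert by simp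
  also have "\<dots> = pi (\<Psi> (f x) + \<Psi> (sum f F))" by (rule Psi_add)
  also have "\<dots> = pi (\<Psi> (f x) + (\<Sum>i\<in>F. \<Psi> (f i)))" by (rule pi_add_cong) (use insert in auto)
  finally show ?case using insert by simp
qed auto

lemma q_pos: "q > 0"
  using p(2) prime_gt_0_nat by simp

lemma Cset_shift: "a' + y \<in> Cset q b c (scal q a' + a) \<longleftrightarrow> y \<in> Cset q b c a"
proof -
  have "\<And>v. (q * lookup (a' + y) v + lookup b v = q * lookup c v + lookup (scal q a' + a) v) \<longleftrightarrow>
         (q * lookup y v + lookup b v = q * lookup c v + lookup a v)"
    by (simp add: lookup_add lookup_scal add_mult_distrib2)
  then show ?thesis by (simp add: Cset_def)
qed

lemma Psi_single_eq: "l \<noteq> 0 \<Longrightarrow> \<Psi> (Poly_Mapping.single a l) = filt (Cset q b c a) (\<Phi> (Poly_Mapping.single a l))"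
  by (simp add: Psi_def tm_def)

lemma Psi_single:
  "pi (\<Psi> (Poly_Mapping.single a' \<kappa> ^ q * Poly_Mapping.single a l)) = pi (Poly_Mapping.single a' \<kappa> * \<Psi> (Poly_Mapping.single a l))"
proof (cases "\<kappa> = 0 \<or> l = 0")
  case True
  have z: "(0::('v,'k) mpoly) ^ q = 0" using q_pos by (simp add: zero_power)
  from True show ?thesis by (elim disjE) (simp_all add: z)
next
  case False
  let ?E = "scal q a' + a" and ?\<mu> = "\<kappa> ^ q * l"
  let ?g = "Poly_Mapping.single a' \<kappa>" and ?t = "Poly_Mapping.single a l"
  have mu: "?\<mu> \<noteq> 0" using False by simp
  have prod: "?g ^ q * ?t = Poly_Mapping.single ?E ?\<mu>"
    by (simp add: single_pow mult_single)
  have "pi (\<Psi> (?g ^ q * ?t)) = pi (filt (Cset q b c ?E) (\<Phi> (?g ^ q * ?t)))"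
    unfolding prod using Psi_single_eq[OF mu] by simp
  also have "\<dots> = pi (filt (Cset q b c ?E) (?g * \<Phi> ?t))"
    by (rule pi_filt) (rule Phi_frob)
  also have "\<dots> = pi (?g * filt (Cset q b c a) (\<Phi> ?t))"
    by (subst filt_shift[of a' _ "Cset q b c a"]) (auto simp: Cset_shift)
  also have "\<dots> = pi (?g * \<Psi> ?t)"
    using Psi_single_eq[of l a] False by simp
  finally show ?thesis .
qed

lemma Psi_frob_single:
  "pi (\<Psi> (Poly_Mapping.single a' \<kappa> ^ q * t)) = pi (Poly_Mapping.single a' \<kappa> * \<Psi> t)"
proof -
  let ?g = "Poly_Mapping.single a' \<kappa>"
  have "pi (\<Psi> (?g ^ q * t)) = pi (\<Psi> (\<Sum>y\<in>keys t. ?g ^ q * tm y t))"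
    by (subst poly_sum_tm[of t]) (simp add: sum_distrib_left)
  also have "\<dots> = pi (\<Sum>y\<in>keys t. \<Psi> (?g ^ q * tm y t))" by (rule Psi_sum)
  also have "\<dots> = pi (\<Sum>y\<in>keys t. ?g * \<Psi> (tm y t))"
    by (rule pi_sum_cong) (simp add: tm_def Psi_single)
  also have "\<dots> = pi ?g \<otimes>\<^bsub>R\<^esub> pi (\<Sum>y\<in>keys t. \<Psi> (tm y t))"
    by (simp add: pi_mult flip: sum_distrib_left)
  also have "\<dots> = pi ?g \<otimes>\<^bsub>R\<^esub> pi (\<Psi> (\<Sum>y\<in>keys t. tm y t))"
    using Psi_sum[of "\<lambda>y. tm y t" "keys t"] by simp
  also have "\<dots> = pi (?g * \<Psi> t)"
    by (simp add: pi_mult flip: poly_sum_tm)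
  finally show ?thesis .
qed

lemma Psi_frob: "pi (\<Psi> (g ^ q * t)) = pi (g * \<Psi> t)"
proof -
  have ch: "prime CHAR(('v,'k) mpoly)" using p by (simp add: CHAR_mpoly)
  have "g ^ q = (\<Sum>y\<in>keys g. tm y g) ^ q" by (simp flip: poly_sum_tm)
  also have "\<dots> = (\<Sum>y\<in>keys g. tm y g ^ q)"
    by (rule freshmans_dream_sum'[OF ch]) (simp add: CHAR_mpoly p(1))
  finally have gq: "g ^ q * t = (\<Sum>y\<in>keys g. tm y g ^ q * t)" by (simp add: sum_distrib_right)
  have "pi (\<Psi> (g ^ q * t)) = pi (\<Sum>y\<in>keys g. \<Psi> (tm y g ^ q * t))"
    unfolding gq by (rule Psi_sum)
  also have "\<dots> = pi (\<Sum>y\<in>keys g. tm y g * \<Psi> t)"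
    by (rule pi_sum_cong) (simp add: tm_def Psi_frob_single)
  also have "\<dots> = pi ((\<Sum>y\<in>keys g. tm y g) * \<Psi> t)"
    by (simp add: sum_distrib_right)
  also have "\<dots> = pi (g * \<Psi> t)"
    by (simp flip: poly_sum_tm)
  finally show ?thesis .
qed

lemma psi_pi: "psi \<phi> q b c (pi u) = pi (\<Psi> u)"
proof -
  have "\<exists>v. pi u = pi v" by blast
  then have "pi u = pi (SOME v. pi u = pi v)" by (rule someI_ex)
  then show ?thesis unfolding psi_def by (metis Psi_cong)
qed

lemma psi_frob: "psi \<phi> q b c \<in> frob_hom R p e"
  unfolding frob_hom_def
proof (intro CollectI conjI ballI)
  show "psi \<phi> q b c \<in> carrier R \<rightarrow> carrier R" by (auto simp: psi_def)
  show "psi \<phi> q b c (x \<oplus>\<^bsub>R\<^esub> y) = psi \<phi> q b c x \<oplus>\<^bsub>R\<^esub> psi \<phi> q b c y"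
    if xy: "x \<in> carrier R" "y \<in> carrier R" for x y
  proof -
    obtain u where u: "x = pi u" by (rule carrier_R_E[OF xy(1)])
    obtain v where v: "y = pi v" by (rule carrier_R_E[OF xy(2)])
    note uv = u v
    have "psi \<phi> q b c (x \<oplus>\<^bsub>R\<^esub> y) = pi (\<Psi> (u + v))" by (simp add: uv psi_pi flip: pi_add)
    also have "\<dots> = pi (\<Psi> u + \<Psi> v)" by (rule Psi_add)
    finally show ?thesis by (simp add: uv psi_pi pi_add)
  qed
  show "psi \<phi> q b c (x [^]\<^bsub>R\<^esub> q \<otimes>\<^bsub>R\<^esub> y) = x \<otimes>\<^bsub>R\<^esub> psi \<phi> q b c y"
    if xy: "x \<in> carrier R" "y \<in> carrier R" for x y
  proof -
    obtain g where g: "x = pi g" by (rule carrier_R_E[OF xy(1)])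
    obtain t where t: "y = pi t" by (rule carrier_R_E[OF xy(2)])
    note gt = g t
    have "psi \<phi> q b c (x [^]\<^bsub>R\<^esub> q \<otimes>\<^bsub>R\<^esub> y) = pi (\<Psi> (g ^ q * t))" by (simp add: gt psi_pi flip: pi_pow pi_mult)
    also have "\<dots> = pi (g * \<Psi> t)" by (rule Psi_frob)
    finally show ?thesis by (simp add: gt psi_pi pi_mult)
  qed
qed

lemma Cset_self: "c \<in> Cset q b c a \<longleftrightarrow> a = b"
proof
  assume "c \<in> Cset q b c a"
  then have "\<And>v. lookup a v = lookup b v" by (simp add: Cset_def)
  then show "a = b" by (rule poly_mapping_eqI)
qed (simp add: Cset_def)

lemma key_tm:
  assumes J: "monomial_ideal_quot I J" and u: "pi u \<in> cartier_ideal R p e J"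
  shows "pi (tm c (\<Phi> (tm b u))) \<in> J"
proof -
  have Jid: "ideal J R" by (rule TC_of_monomial(1)[OF J])
  have "psi \<phi> q b c (pi u) \<in> J" using u psi_frob by (auto simp: cartier_ideal_def)
  then have "pi (\<Psi> u) \<in> J" by (simp add: psi_pi)
  then have T: "pi (tm c (\<Psi> u)) \<in> J" using TC_of_monomial(2)[OF J] by blast
  have "tm c (\<Psi> u) = (\<Sum>a\<in>keys u. if a = b then tm c (\<Phi> (tm a u)) else 0)"
    unfolding Psi_def tm_sum by (rule sum.cong) (auto simp: tm_filt Cset_self)
  also have "\<dots> = (if b \<in> keys u then tm c (\<Phi> (tm b u)) else 0)"
    by (simp add: sum.delta')
  finally have eq: "tm c (\<Psi> u) = (if b \<in> keys u then tm c (\<Phi> (tm b u)) else 0)" .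
  show ?thesis
  proof (cases "b \<in> keys u")
    case True then show ?thesis using T eq by simp
  next
    case False
    then have "tm b u \<in> I" using ideal_polyringD(1)[OF idI] by (simp add: tm_not_key)
    then have "\<Phi> (tm b u) \<in> I" by (rule Phi_I)
    then have "tm c (\<Phi> (tm b u)) \<in> I" by (rule I_tm)
    then have "pi (tm c (\<Phi> (tm b u))) = \<zero>\<^bsub>R\<^esub>" by (simp add: pi_zero_iff)
    then show ?thesis using additive_subgroup.zero_closed[OF ideal.axioms(1)[OF Jid]] by simp
  qed
qed

end

lemma TC_cartier:
  assumes p: "p = CHAR('k)" "prime p" and J: "monomial_ideal_quot I J"
    and u: "pi u \<in> cartier_ideal R p e J"
  shows "pi (tm b u) \<in> cartier_ideal R p e J"
  unfolding cartier_ideal_def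
proof (intro CollectI conjI ballI)
  show "pi (tm b u) \<in> carrier R" by simp
  fix \<phi> assume \<phi>: "\<phi> \<in> frob_hom R p e"
  have "pi (Phi \<phi> (tm b u)) \<in> J"
    by (rule ideal_from_tms[OF TC_of_monomial(1)[OF J]]) (rule key_tm[OF p \<phi> J u])
  then show "\<phi> (pi (tm b u)) \<in> J" by (simp add: Phi_pi[OF p \<phi>])
qed

end

theorem mainTheorem10:
  fixes I :: "('v::finite, 'k::field) mpoly set"
    and J :: "('v, 'k) mpoly set set"
    and e :: nat
  assumes "prime CHAR('k)"
    and "F_finite TYPE('k)"
    and "squarefree_monomial_ideal I"
    and "monomial_ideal_quot I J"
  shows "monomial_ideal_quot I (cartier_ideal (polyring Quot I) CHAR('k) e J)
       \<and> monomial_ideal_quot I (cartier_core (polyring Quot I) CHAR('k) J)"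
proof -
  obtain G0 where "I = genideal polyring (monom_pm ` G0)"
    using assms(3) unfolding squarefree_monomial_ideal_def by blast
  then have IG: "I = MI G0" by (simp add: genideal_MI)
  interpret S: setting G0 I by unfold_locales (rule IG)
  have Jid: "ideal J (polyring Quot I)" by (rule S.TC_of_monomial(1)[OF assms(4)])
  have Je_id: "ideal (cartier_ideal (polyring Quot I) CHAR('k) s J) (polyring Quot I)" for s
    by (rule S.cartier_ideal_ideal[OF Jid])
  have Je_tc: "S.pi (tm b u) \<in> cartier_ideal (polyring Quot I) CHAR('k) s J"
    if "S.pi u \<in> cartier_ideal (polyring Quot I) CHAR('k) s J" for s u b
    by (rule S.TC_cartier[OF refl assms(1) assms(4) that])
  have A: "monomial_ideal_quot I (cartier_ideal (polyring Quot I) CHAR('k) e J)"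
    by (rule S.monomial_of_TC[OF Je_id Je_tc])
  have core: "cartier_core (polyring Quot I) CHAR('k) J = \<Inter> (range (\<lambda>s. cartier_ideal (polyring Quot I) CHAR('k) s J))"
    by (simp add: cartier_core_def)
  have B: "monomial_ideal_quot I (cartier_core (polyring Quot I) CHAR('k) J)"
  proof (rule S.monomial_of_TC)
    show "ideal (cartier_core (polyring Quot I) CHAR('k) J) (polyring Quot I)"
      unfolding core by (rule S.Rr.i_Intersect) (auto intro: Je_id)
    show "S.pi (tm a u) \<in> cartier_core (polyring Quot I) CHAR('k) J"
      if "S.pi u \<in> cartier_core (polyring Quot I) CHAR('k) J" for u a
      using that Je_tc unfolding core by blast
  qed
  show ?thesis using A B by blast
qed

end
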